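(* Let $r \ge 3$, $1 \le k \le r-1$ and $p \ge 1$ be integers. There exists $n_0 = n_0(r,k,p)$ such that for all $n \ge n_0$: if $\mathcal{G}$ is an $r$-uniform $n$-vertex hypergraph with \[ |E(\mathcal{G})| \ge 2 r^{r-k} f(r, p r^{r-k}) \binom{n-k-1}{r-k-1}, \] then $\mathcal{G}$ contains a sunflower with $p$ petals whose core has size at most $k$.
   Context: A sunflower with $p$ petals is a collection of $p$ distinct sets $h_1,\dots,h_p$ (here hyperedges of $\mathcal{G}$) together with a set $Y$ (the core) such that $Y \subseteq h_i$ for all $i$ and $h_i \cap h_j = Y$ for all $i \ne j$; the petals are the sets $h_i \setminus Y$. For integers $r,p \ge 1$, $f(r,p)$ denotes the minimum integer such that every $r$-uniform hypergraph with at least $f(r,p)$ hyperedges contains a sunflower with $p$ petals (this is finite by the Erdős–Rado Sunflower Lemma). *)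

theory Defs
  imports Main
begin

definition sunflower :: "'a set set \<Rightarrow> 'a set set \<Rightarrow> 'a set \<Rightarrow> bool" where
  "sunflower G S Y \<longleftrightarrow> S \<subseteq> G \<and> (\<forall>h\<in>S. Y \<subseteq> h) \<and>
     (\<forall>h\<in>S. \<forall>h'\<in>S. h \<noteq> h' \<longrightarrow> h \<inter> h' = Y)"

definition has_sunflower :: "'a set set \<Rightarrow> nat \<Rightarrow> bool" where
  "has_sunflower G p \<longleftrightarrow> (\<exists>S Y. sunflower G S Y \<and> finite S \<and> card S = p)"

definition uniform :: "nat \<Rightarrow> 'a set set \<Rightarrow> bool" where
  "uniform r G \<longleftrightarrow> (\<forall>e\<in>G. finite e \<and> card e = r)"

text \<open>f(r,p): least m such that every (finite) r-uniform hypergraph with at least m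
  hyperedges contains a sunflower with p petals (vertices taken from nat, w.l.o.g.).\<close>
definition sunflower_num :: "nat \<Rightarrow> nat \<Rightarrow> nat" where
  "sunflower_num r p = (LEAST m. \<forall>G :: nat set set.
     finite G \<and> uniform r G \<and> card G \<ge> m \<longrightarrow> has_sunflower G p)"

end

theory Submission
  imports Defs
begin


lemma sunflower_sub: "sunflower G S Y \<Longrightarrow> S' \<subseteq> S \<Longrightarrow> sunflower G S' Y"
  unfolding sunflower_def by (metis subsetD subset_trans)

lemma erdos_rado: "\<exists>B. \<forall>G :: 'b set set. finite G \<and> uniform r G \<and> card G \<ge> B \<longrightarrow> has_sunflower G q"
proof (induction r)
  case 0
  show ?case
  proof (intro exI[of _ 2] allI impI)
    fix G :: "'b set set" assume a: "finite G \<and> uniform 0 G \<and> card G \<ge> 2"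
    then have "G \<subseteq> {{}}" unfolding uniform_def by auto
    then have "card G \<le> 1" using card_mono[of "{{}}" G] by simp
    with a show "has_sunflower G q" by simp
  qed
next
  case (Suc r)
  then obtain B where B: "\<And>G :: 'b set set. finite G \<Longrightarrow> uniform r G \<Longrightarrow> card G \<ge> B \<Longrightarrow> has_sunflower G q" by blast
  show ?case
  proof (intro exI[of _ "q * Suc r * B + 1"] allI impI)
    fix G :: "'b set set" assume a: "finite G \<and> uniform (Suc r) G \<and> card G \<ge> q * Suc r * B + 1"
    hence fG: "finite G" and uG: "uniform (Suc r) G" and cG: "card G \<ge> q * Suc r * B + 1" by auto
    define C where "C = {D. D \<subseteq> G \<and> (\<forall>h\<in>D. \<forall>h'\<in>D. h \<noteq> h' \<longrightarrow> h \<inter> h' = {})}"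
    have "C \<subseteq> Pow G" by (auto simp: C_def)
    hence fC: "finite C" using fG by (simp add: finite_subset)
    have "{} \<in> C" unfolding C_def by auto
    have "Max (card ` C) \<in> card ` C" using fC \<open>{} \<in> C\<close> by (intro Max_in) auto
    then obtain D where DC: "D \<in> C" and DM: "card D = Max (card ` C)" by auto
    have Dmax: "\<And>D'. D' \<in> C \<Longrightarrow> card D' \<le> card D" unfolding DM using fC by (intro Max_ge) auto
    have DG: "D \<subseteq> G" and Ddisj: "\<forall>h\<in>D. \<forall>h'\<in>D. h \<noteq> h' \<longrightarrow> h \<inter> h' = {}" using DC unfolding C_def by auto
    have fD: "finite D" using finite_subset[OF DG fG] .
    show "has_sunflower G q"
    proof (cases "card D \<ge> q")
      case True
      then obtain T where T: "T \<subseteq> D" "card T = q" "finite T" by (metis obtain_subset_with_card_n)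
      have TG: "T \<subseteq> G" using T(1) DG by (rule subset_trans)
      have Tdisj: "\<forall>h\<in>T. \<forall>h'\<in>T. h \<noteq> h' \<longrightarrow> h \<inter> h' = {}"
      proof (intro ballI impI)
        fix h h' assume "h \<in> T" "h' \<in> T" "h \<noteq> h'"
        hence "h \<in> D" "h' \<in> D" using T(1) by auto
        thus "h \<inter> h' = {}" using Ddisj \<open>h \<noteq> h'\<close> by simp
      qed
      have "sunflower G T {}" unfolding sunflower_def using TG Tdisj by simp
      then show ?thesis unfolding has_sunflower_def using T(2,3) by (intro exI[of _ T] exI[of _ "{}"]) simp
    next
      case False
      define U where "U = \<Union>D"
      have fU: "finite U" unfolding U_def
      proof (rule finite_Union[OF fD])
        fix e assume "e \<in> D" thus "finite e" using DG uG unfolding uniform_def by auto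
      qed
      have "card U \<le> sum card D" unfolding U_def by (rule card_Union_le_sum_card)
      also have "\<dots> = card D * Suc r" using DG uG unfolding uniform_def by (simp add: subset_iff)
      also have "\<dots> \<le> q * Suc r" using False by (intro mult_le_mono1) simp
      finally have cU: "card U \<le> q * Suc r" .
      have meet: "\<forall>e\<in>G. \<exists>x\<in>U. x \<in> e"
      proof
        fix e assume eG: "e \<in> G"
        have "card e = Suc r" using eG uG unfolding uniform_def by simp
        hence ne: "e \<noteq> {}" by auto
        show "\<exists>x\<in>U. x \<in> e"
        proof (rule ccontr)
          assume na: "\<not> (\<exists>x\<in>U. x \<in> e)"
          have "e \<notin> D" using na ne unfolding U_def by blast
          have disjE: "\<forall>h\<in>D. e \<inter> h = {}" using na unfolding U_def by auto
          have "\<forall>h\<in>insert e D. \<forall>h'\<in>insert e D. h \<noteq> h' \<longrightarrow> h \<inter> h' = {}"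
          proof (intro ballI impI)
            fix h h' assume "h \<in> insert e D" "h' \<in> insert e D" "h \<noteq> h'"
            thus "h \<inter> h' = {}" using disjE Ddisj by (metis Int_commute insert_iff)
          qed
          hence "insert e D \<in> C" unfolding C_def using eG DG by simp
          hence "card (insert e D) \<le> card D" by (rule Dmax)
          with \<open>e \<notin> D\<close> fD show False by simp
        qed
      qed
      define Gx where "Gx x = {e\<in>G. x \<in> e}" for x
      have "\<exists>x\<in>U. card (Gx x) \<ge> B"
      proof (rule ccontr)
        assume "\<not> (\<exists>x\<in>U. card (Gx x) \<ge> B)"
        hence lt: "\<forall>x\<in>U. card (Gx x) \<le> B" by auto
        have "G \<subseteq> (\<Union>x\<in>U. Gx x)" using meet unfolding Gx_def by blast
        hence "card G \<le> card (\<Union>x\<in>U. Gx x)" by (intro card_mono) (auto simp: Gx_def fU fG)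
        also have "\<dots> \<le> (\<Sum>x\<in>U. card (Gx x))" using fU by (rule card_UN_le)
        also have "\<dots> \<le> card U * B" using sum_bounded_above[of U "\<lambda>x. card (Gx x)" B] lt by simp
        also have "\<dots> \<le> q * Suc r * B" using cU by simp
        finally show False using cG by linarith
      qed
      then obtain x where xB: "card (Gx x) \<ge> B" by blast
      define L where "L = (\<lambda>e. e - {x}) ` Gx x"
      have inj: "inj_on (\<lambda>e. e - {x}) (Gx x)"
      proof (rule inj_onI)
        fix a b assume "a \<in> Gx x" "b \<in> Gx x" "a - {x} = b - {x}"
        thus "a = b" unfolding Gx_def by (metis mem_Collect_eq insert_Diff)
      qed
      have fGx: "finite (Gx x)" unfolding Gx_def using fG by simp
      have cL: "card L = card (Gx x)" unfolding L_def using inj by (simp add: card_image)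
      have uL: "uniform r L" unfolding uniform_def L_def Gx_def using uG unfolding uniform_def by auto
      have fL: "finite L" unfolding L_def using fGx by simp
      have "has_sunflower L q" using B[OF fL uL] cL xB by simp
      then obtain S' Y' where S': "sunflower L S' Y'" "finite S'" "card S' = q" unfolding has_sunflower_def by blast
      have S'L: "S' \<subseteq> L" using S'(1) unfolding sunflower_def by simp
      have xnot: "\<forall>a\<in>S'. x \<notin> a"
      proof
        fix a assume "a \<in> S'"
        hence "a \<in> L" using S'L by auto
        then obtain e where "a = e - {x}" unfolding L_def by auto
        thus "x \<notin> a" by simp
      qed
      have injI: "inj_on (insert x) S'"
      proof (rule inj_onI)
        fix a b assume "a \<in> S'" "b \<in> S'" "insert x a = insert x b"
        thus "a = b" using xnot by (metis Diff_insert_absorb)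
      qed
      have "sunflower G (insert x ` S') (insert x Y')"
        unfolding sunflower_def
      proof (intro conjI ballI impI)
        show "insert x ` S' \<subseteq> G"
        proof
          fix h assume "h \<in> insert x ` S'"
          then obtain a where a: "a \<in> S'" "h = insert x a" by auto
          hence "a \<in> L" using S'L by auto
          then obtain e where e: "e \<in> Gx x" "a = e - {x}" unfolding L_def by auto
          hence "h = e" using a(2) unfolding Gx_def by auto
          thus "h \<in> G" using e(1) unfolding Gx_def by simp
        qed
      next
        fix h assume "h \<in> insert x ` S'" thus "insert x Y' \<subseteq> h" using S'(1) unfolding sunflower_def by auto
      next
        fix h h' assume "h \<in> insert x ` S'" "h' \<in> insert x ` S'" "h \<noteq> h'"
        then obtain a b where ab: "a \<in> S'" "b \<in> S'" "h = insert x a" "h' = insert x b" "a \<noteq> b" by blast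
        have "\<forall>h\<in>S'. \<forall>h'\<in>S'. h \<noteq> h' \<longrightarrow> h \<inter> h' = Y'" using S'(1) unfolding sunflower_def by simp
        hence "a \<inter> b = Y'" using ab by simp
        thus "h \<inter> h' = insert x Y'" using ab by auto
      qed
      moreover have "card (insert x ` S') = q" using injI S' by (simp add: card_image)
      moreover have "finite (insert x ` S')" using S'(2) by simp
      ultimately show ?thesis unfolding has_sunflower_def by blast
    qed
  qed
qed


lemma sf_nat:
  fixes G :: "nat set set"
  assumes "finite G" "uniform r G" "card G \<ge> sunflower_num r q"
  shows "has_sunflower G q"
proof -
  let ?P = "\<lambda>m. \<forall>G :: nat set set. finite G \<and> uniform r G \<and> card G \<ge> m \<longrightarrow> has_sunflower G q"
  have "\<exists>m. ?P m" by (rule erdos_rado)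
  hence "?P (LEAST m. ?P m)" by (rule LeastI_ex)
  hence "?P (sunflower_num r q)" unfolding sunflower_num_def .
  thus ?thesis using assms by blast
qed

lemma inj_image_sets:
  assumes inj: "inj_on h (\<Union>G)"
  shows "inj_on ((`) h) G"
proof (rule inj_onI)
  fix a b assume ab: "a \<in> G" "b \<in> G" "h ` a = h ` b"
  have "a \<subseteq> \<Union>G" "b \<subseteq> \<Union>G" using ab by auto
  thus "a = b" using inj_on_image_eq_iff[OF inj] ab(3) by metis
qed

lemma has_sunflower_inj_image:
  assumes inj: "inj_on h (\<Union>G)" and hs: "has_sunflower ((`) h ` G) q"
  shows "has_sunflower G q"
proof -
  obtain S' Y' where S': "sunflower ((`) h ` G) S' Y'" "finite S'" "card S' = q"
    using hs unfolding has_sunflower_def by blast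
  have S'sub: "S' \<subseteq> (`) h ` G" using S'(1) unfolding sunflower_def by simp
  define S where "S = {e\<in>G. h ` e \<in> S'}"
  define Y where "Y = {u\<in>\<Union>G. h u \<in> Y'}"
  have injG: "inj_on ((`) h) G" using inj by (rule inj_image_sets)
  have imS: "(`) h ` S = S'"
  proof
    show "(`) h ` S \<subseteq> S'" unfolding S_def by auto
    show "S' \<subseteq> (`) h ` S"
    proof
      fix x assume x: "x \<in> S'"
      then obtain e where "e \<in> G" "x = h ` e" using S'sub by auto
      thus "x \<in> (`) h ` S" using x unfolding S_def by auto
    qed
  qed
  have injS: "inj_on ((`) h) S" using injG unfolding S_def by (rule inj_on_subset) auto
  have cS: "card S = q" using card_image[OF injS] imS S'(3) by simp
  have fS: "finite S" using imS S'(2) injS finite_image_iff by metis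
  have core: "Y \<subseteq> e" if "e \<in> S" for e
  proof
    fix u assume u: "u \<in> Y"
    have eG: "e \<in> G" and "h ` e \<in> S'" using that unfolding S_def by auto
    hence "Y' \<subseteq> h ` e" using S'(1) unfolding sunflower_def by auto
    with u obtain v where v: "v \<in> e" "h v = h u" unfolding Y_def by auto
    have "u \<in> \<Union>G" "v \<in> \<Union>G" using u v eG unfolding Y_def by auto
    with v inj have "u = v" by (metis inj_on_def)
    thus "u \<in> e" using v by simp
  qed
  have "sunflower G S Y" unfolding sunflower_def
  proof (intro conjI ballI impI)
    show "S \<subseteq> G" unfolding S_def by auto
  next
    fix e assume "e \<in> S" thus "Y \<subseteq> e" by (rule core)
  next
    fix e e' assume ee: "e \<in> S" "e' \<in> S" "e \<noteq> e'"
    have ne: "h ` e \<noteq> h ` e'" using injS ee by (meson inj_on_def)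
    have in1: "h ` e \<in> S'" "h ` e' \<in> S'" using ee unfolding S_def by auto
    have int: "h ` e \<inter> h ` e' = Y'" using S'(1) in1 ne unfolding sunflower_def by simp
    have eG: "e \<in> G" using ee unfolding S_def by simp
    show "e \<inter> e' = Y"
    proof
      show "e \<inter> e' \<subseteq> Y"
      proof
        fix u assume "u \<in> e \<inter> e'"
        hence "h u \<in> h ` e \<inter> h ` e'" by auto
        hence "h u \<in> Y'" using int by simp
        thus "u \<in> Y" unfolding Y_def using \<open>u \<in> e \<inter> e'\<close> eG by auto
      qed
      show "Y \<subseteq> e \<inter> e'" using core ee by simp
    qed
  qed
  thus ?thesis unfolding has_sunflower_def using fS cS by blast
qed

lemma sf_any:
  fixes G :: "'b set set"
  assumes fG: "finite G" and uG: "uniform r G" and cG: "card G \<ge> sunflower_num r q"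
  shows "has_sunflower G q"
proof -
  have "finite (\<Union>G)" using fG uG unfolding uniform_def by simp
  then obtain h :: "'b \<Rightarrow> nat" where h: "inj_on h (\<Union>G)" using finite_imp_inj_to_nat_seg by metis
  have injG: "inj_on ((`) h) G" using h by (rule inj_image_sets)
  have "has_sunflower ((`) h ` G) q"
  proof (rule sf_nat)
    show "finite ((`) h ` G)" using fG by simp
    show "uniform r ((`) h ` G)" unfolding uniform_def
    proof
      fix e' assume "e' \<in> (`) h ` G"
      then obtain e where e: "e \<in> G" "e' = h ` e" by blast
      have "inj_on h e" using h e(1) inj_on_subset by blast
      thus "finite e' \<and> card e' = r" using e uG unfolding uniform_def by (simp add: card_image)
    qed
    show "card ((`) h ` G) \<ge> sunflower_num r q" using card_image[OF injG] cG by simp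
  qed
  thus ?thesis by (rule has_sunflower_inj_image[OF h])
qed




lemma sunflower_mono: "sunflower G' S Y \<Longrightarrow> G' \<subseteq> G \<Longrightarrow> sunflower G S Y"
  unfolding sunflower_def by (metis subset_trans)

lemma sunflower_sub_card:
  assumes "sunflower G S Y" "finite S" "c \<le> card S"
  shows "\<exists>S'. sunflower G S' Y \<and> finite S' \<and> card S' = c"
proof -
  obtain T where "T \<subseteq> S" "card T = c" "finite T" using obtain_subset_with_card_n[OF assms(3)] by metis
  thus ?thesis using sunflower_sub[OF assms(1)] by metis
qed

lemma sunflower_core:
  assumes sf: "sunflower G S Y" and uG: "uniform r G" and fS: "finite S" and c2: "2 \<le> card S"
  shows "\<exists>h\<in>S. Y \<subset> h \<and> finite h \<and> card h = r" "finite Y" "card Y < r"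
proof -
  obtain h where h: "h \<in> S" using c2 fS by (metis card.empty ex_in_conv not_numeral_le_zero)
  have "card (S - {h}) \<ge> 1" using c2 fS h by simp
  then obtain h' where h': "h' \<in> S - {h}" by (metis card.empty ex_in_conv not_one_le_zero)
  have SG: "S \<subseteq> G" using sf unfolding sunflower_def by simp
  have fh: "finite h" "card h = r" "finite h'" "card h' = r" using SG h h' uG unfolding uniform_def by auto
  have Yeq: "h \<inter> h' = Y" using sf h h' unfolding sunflower_def by auto
  have "Y \<noteq> h"
  proof
    assume "Y = h"
    hence "h \<subseteq> h'" using Yeq by auto
    hence "h = h'" using fh by (metis card_subset_eq)
    thus False using h' by simp
  qed
  hence psub: "Y \<subset> h" using Yeq by auto
  thus "\<exists>h\<in>S. Y \<subset> h \<and> finite h \<and> card h = r" using h fh by auto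
  show fY: "finite Y" using psub fh finite_subset by auto
  show "card Y < r" using psubset_card_mono[OF fh(1) psub] fh by simp
qed

lemma minimal_exists:
  fixes P :: "'a set \<Rightarrow> bool"
  shows "finite Y \<Longrightarrow> P Y \<Longrightarrow> \<exists>Y'\<subseteq>Y. P Y' \<and> (\<forall>Z. Z \<subset> Y' \<longrightarrow> \<not> P Z)"
proof (induction "card Y" arbitrary: Y rule: less_induct)
  case less
  show ?case
  proof (cases "\<exists>Z. Z \<subset> Y \<and> P Z")
    case True
    then obtain Z where Z: "Z \<subset> Y" "P Z" by blast
    have "card Z < card Y" using psubset_card_mono[OF less.prems(1) Z(1)] .
    moreover have "finite Z" using Z(1) less.prems(1) finite_subset by auto
    ultimately obtain Y' where "Y' \<subseteq> Z" "P Y'" "\<forall>Z. Z \<subset> Y' \<longrightarrow> \<not> P Z" using less.hyps Z(2) by metis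
    thus ?thesis using Z(1) by (meson psubset_imp_subset subset_trans)
  next
    case False
    thus ?thesis using less.prems by blast
  qed
qed

lemma binom_shift: "(a choose b) \<le> ((a + d) choose (b + d))"
proof (induction d)
  case 0 thus ?case by simp
next
  case (Suc d)
  have "((a + Suc d) choose (b + Suc d)) = ((a + d) choose (b + d)) + ((a + d) choose Suc (b + d))"
    by simp
  thus ?case using Suc.IH by simp
qed

lemma deg_bound:
  assumes fV: "finite V" and GV: "\<forall>e\<in>G. e \<subseteq> V" and uG: "uniform r G"
    and YV: "Y \<subseteq> V" and fY: "finite Y"
  shows "card {e\<in>G. Y \<subseteq> e} \<le> (card V - card Y) choose (r - card Y)"
proof -
  let ?T = "{d. d \<subseteq> V - Y \<and> card d = r - card Y}"
  have inj: "inj_on (\<lambda>e. e - Y) {e\<in>G. Y \<subseteq> e}"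
  proof (rule inj_onI)
    fix a b assume "a \<in> {e\<in>G. Y \<subseteq> e}" "b \<in> {e\<in>G. Y \<subseteq> e}" "a - Y = b - Y"
    thus "a = b" by (metis Diff_partition mem_Collect_eq)
  qed
  have im: "(\<lambda>e. e - Y) ` {e\<in>G. Y \<subseteq> e} \<subseteq> ?T"
  proof
    fix d assume "d \<in> (\<lambda>e. e - Y) ` {e\<in>G. Y \<subseteq> e}"
    then obtain e where e: "e \<in> G" "Y \<subseteq> e" "d = e - Y" by auto
    have "finite e" "card e = r" using e(1) uG unfolding uniform_def by auto
    hence "card d = r - card Y" using e(2,3) fY by (simp add: card_Diff_subset)
    moreover have "d \<subseteq> V - Y" using e GV by auto
    ultimately show "d \<in> ?T" by simp
  qed
  have "?T \<subseteq> Pow (V - Y)" by auto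
  hence fT: "finite ?T" using fV by (metis finite_Diff finite_Pow_iff finite_subset)
  have "card {e\<in>G. Y \<subseteq> e} \<le> card ?T" using card_inj_on_le[OF inj im fT] .
  also have "card ?T = card (V - Y) choose (r - card Y)" using n_subsets[of "V - Y" "r - card Y"] fV by simp
  also have "card (V - Y) = card V - card Y" using YV fY by (simp add: card_Diff_subset)
  finally show ?thesis .
qed




definition disj :: "'a set \<Rightarrow> 'a set \<Rightarrow> bool" where "disj A B \<longleftrightarrow> A \<inter> B = {}"

lemma disjI: "(\<And>x. x \<in> A \<Longrightarrow> x \<in> B \<Longrightarrow> False) \<Longrightarrow> disj A B"
  unfolding disj_def by auto

lemma disjD: "disj A B \<Longrightarrow> x \<in> A \<Longrightarrow> x \<in> B \<Longrightarrow> False"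
  unfolding disj_def by auto

lemma lift_aux:
  assumes uG: "uniform r G" and r0: "0 < r"
  shows "finite T \<Longrightarrow> finite X \<Longrightarrow>
    (\<forall>Y\<in>T. \<exists>S. sunflower G S Y \<and> finite S \<and> card S \<ge> card X + card T * r) \<Longrightarrow>
    \<exists>e. \<forall>Y\<in>T. e Y \<in> G \<and> Y \<subseteq> e Y \<and> disj (e Y - Y) X \<and>
         (\<forall>Y'\<in>T. Y' \<noteq> Y \<longrightarrow> disj (e Y - Y) (e Y'))"
proof (induction T arbitrary: X rule: finite_induct)
  case empty
  show ?case by simp
next
  case (insert Y0 T0)
  obtain S0 where S0: "sunflower G S0 Y0" "finite S0" "card S0 \<ge> card X + card (insert Y0 T0) * r"
    using insert.prems(2) by auto
  have cT: "card (insert Y0 T0) = Suc (card T0)" using insert.hyps by simp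
  have "card S0 > 0" using S0(3) cT r0 by simp
  then obtain h0 where h0: "h0 \<in> S0" by (metis card.empty ex_in_conv less_irrefl)
  have S0G: "S0 \<subseteq> G" and Y0h: "\<forall>h\<in>S0. Y0 \<subseteq> h"
    and S0p: "\<forall>h\<in>S0. \<forall>h'\<in>S0. h \<noteq> h' \<longrightarrow> h \<inter> h' = Y0" using S0(1) unfolding sunflower_def by simp_all
  have fh0: "finite h0" "card h0 = r" using h0 S0G uG unfolding uniform_def by auto
  have Y0h0: "Y0 \<subseteq> h0" using Y0h h0 by auto
  have fY0: "finite Y0" using finite_subset[OF Y0h0 fh0(1)] .
  have cY0: "card Y0 \<le> r" using card_mono[OF fh0(1) Y0h0] fh0(2) by simp
  define X' where "X' = X \<union> Y0"
  have fX': "finite X'" unfolding X'_def using insert.prems(1) fY0 by simp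
  have cX': "card X' \<le> card X + r" unfolding X'_def using card_Un_le[of X Y0] cY0 by simp
  have "\<forall>Y\<in>T0. \<exists>S. sunflower G S Y \<and> finite S \<and> card S \<ge> card X' + card T0 * r"
  proof
    fix Y assume "Y \<in> T0"
    then obtain S where "sunflower G S Y" "finite S" "card S \<ge> card X + card (insert Y0 T0) * r"
      using insert.prems(2) by auto
    moreover have "card X + card (insert Y0 T0) * r \<ge> card X' + card T0 * r" using cX' cT by simp
    ultimately show "\<exists>S. sunflower G S Y \<and> finite S \<and> card S \<ge> card X' + card T0 * r" by (metis le_trans)
  qed
  then obtain e where e: "\<forall>Y\<in>T0. e Y \<in> G \<and> Y \<subseteq> e Y \<and> disj (e Y - Y) X' \<and>
         (\<forall>Y'\<in>T0. Y' \<noteq> Y \<longrightarrow> disj (e Y - Y) (e Y'))"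
    using insert.IH[OF fX'] by blast
  have eG: "\<And>Y. Y \<in> T0 \<Longrightarrow> e Y \<in> G" using e by simp
  have eY: "\<And>Y. Y \<in> T0 \<Longrightarrow> Y \<subseteq> e Y" using e by simp
  have eX: "\<And>Y. Y \<in> T0 \<Longrightarrow> disj (e Y - Y) X'" using e by simp
  have eP: "\<And>Y Y'. Y \<in> T0 \<Longrightarrow> Y' \<in> T0 \<Longrightarrow> Y' \<noteq> Y \<Longrightarrow> disj (e Y - Y) (e Y')" using e by simp
  have efin: "\<And>Y. Y \<in> T0 \<Longrightarrow> finite (e Y) \<and> card (e Y) = r" using eG uG unfolding uniform_def by simp
  define B where "B = X \<union> (\<Union>Y\<in>T0. e Y)"
  have cE: "card (\<Union>Y\<in>T0. e Y) \<le> card T0 * r"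
  proof -
    have "card (\<Union>Y\<in>T0. e Y) \<le> (\<Sum>Y\<in>T0. card (e Y))" using insert.hyps(1) by (rule card_UN_le)
    also have "\<dots> = (\<Sum>Y\<in>T0. r)" using efin by (intro sum.cong) simp_all
    finally show ?thesis by simp
  qed
  have fB: "finite B" unfolding B_def using insert.prems(1) insert.hyps(1) efin by simp
  have cB: "card B \<le> card X + card T0 * r" unfolding B_def using card_Un_le[of X "\<Union>Y\<in>T0. e Y"] cE by simp
  have "\<exists>h\<in>S0. disj (h - Y0) B"
  proof (rule ccontr)
    assume na: "\<not> (\<exists>h\<in>S0. disj (h - Y0) B)"
    have "\<forall>h\<in>S0. \<exists>b. b \<in> h - Y0 \<and> b \<in> B"
    proof
      fix h assume "h \<in> S0"
      hence "\<not> disj (h - Y0) B" using na by simp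
      thus "\<exists>b. b \<in> h - Y0 \<and> b \<in> B" using disjI by metis
    qed
    then obtain g where g: "\<forall>h\<in>S0. g h \<in> h - Y0 \<and> g h \<in> B" by metis
    have "inj_on g S0"
    proof (rule inj_onI)
      fix h h' assume hh: "h \<in> S0" "h' \<in> S0" "g h = g h'"
      show "h = h'"
      proof (rule ccontr)
        assume hne: "h \<noteq> h'"
        have "h \<inter> h' = Y0" using S0p hh(1,2) hne by simp
        moreover have "g h \<in> h - Y0" "g h' \<in> h' - Y0" using g hh(1,2) by simp_all
        moreover have "g h \<in> h'" using \<open>g h' \<in> h' - Y0\<close> hh(3) by simp
        ultimately have "g h \<in> h \<inter> h'" "g h \<notin> Y0" by auto
        thus False using \<open>h \<inter> h' = Y0\<close> by simp
      qed
    qed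
    moreover have "g ` S0 \<subseteq> B" using g by auto
    ultimately have "card S0 \<le> card B" using card_inj_on_le fB by metis
    thus False using cB S0(3) cT r0 by simp
  qed
  then obtain h where h: "h \<in> S0" "disj (h - Y0) B" by blast
  define e' where "e' = e(Y0 := h)"
  have hG: "h \<in> G" "Y0 \<subseteq> h" using h(1) S0G Y0h by auto
  have eB: "\<And>Y. Y \<in> T0 \<Longrightarrow> e Y \<subseteq> B" unfolding B_def by auto
  have e'T0: "\<And>Y. Y \<in> T0 \<Longrightarrow> e' Y = e Y" unfolding e'_def using insert.hyps(2) by auto
  have e'Y0: "e' Y0 = h" unfolding e'_def by simp
  show ?case
  proof (intro exI[of _ e'] ballI)
    fix Y assume Y: "Y \<in> insert Y0 T0"
    show "e' Y \<in> G \<and> Y \<subseteq> e' Y \<and> disj (e' Y - Y) X \<and>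
         (\<forall>Y'\<in>insert Y0 T0. Y' \<noteq> Y \<longrightarrow> disj (e' Y - Y) (e' Y'))"
    proof (cases "Y = Y0")
      case True
      have a: "disj (h - Y0) X" by (rule disjI) (use h(2) in \<open>auto simp: B_def dest: disjD\<close>)
      have b: "\<forall>Y'\<in>insert Y0 T0. Y' \<noteq> Y0 \<longrightarrow> disj (h - Y0) (e' Y')"
      proof (intro ballI impI)
        fix Y' assume Y': "Y' \<in> insert Y0 T0" "Y' \<noteq> Y0"
        hence YT': "Y' \<in> T0" by simp
        have "e Y' \<subseteq> B" using eB[OF YT'] .
        hence "disj (h - Y0) (e Y')" by (intro disjI) (use h(2) in \<open>auto dest: disjD\<close>)
        thus "disj (h - Y0) (e' Y')" using e'T0[OF YT'] by simp
      qed
      show ?thesis using True hG a b e'Y0 by simp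
    next
      case False
      hence YT: "Y \<in> T0" using Y by simp
      have e'Y: "e' Y = e Y" using e'T0[OF YT] .
      have a: "disj (e Y - Y) X" by (rule disjI) (use eX[OF YT] in \<open>auto simp: X'_def dest: disjD\<close>)
      have b: "disj (e Y - Y) h"
      proof (rule disjI)
        fix x assume x: "x \<in> e Y - Y" "x \<in> h"
        show False
        proof (cases "x \<in> Y0")
          case True
          thus False using x eX[OF YT] unfolding X'_def by (auto dest: disjD)
        next
          case False
          hence "x \<in> h - Y0" using x by simp
          moreover have "x \<in> B" using x eB[OF YT] by auto
          ultimately show False using h(2) by (auto dest: disjD)
        qed
      qed
      have c: "\<forall>Y'\<in>insert Y0 T0. Y' \<noteq> Y \<longrightarrow> disj (e' Y - Y) (e' Y')"
      proof (intro ballI impI)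
        fix Y' assume Y': "Y' \<in> insert Y0 T0" "Y' \<noteq> Y"
        show "disj (e' Y - Y) (e' Y')"
        proof (cases "Y' = Y0")
          case True thus ?thesis using b e'Y e'Y0 by simp
        next
          case False
          hence YT': "Y' \<in> T0" using Y' by simp
          show ?thesis using eP[OF YT YT' Y'(2)] e'Y e'T0[OF YT'] by simp
        qed
      qed
      show ?thesis using e'Y eG[OF YT] eY[OF YT] a c by simp
    qed
  qed
qed

lemma lift:
  assumes uG: "uniform r G" and r0: "0 < r" and fT: "finite T"
    and rich: "\<forall>Y\<in>T. \<exists>S. sunflower G S Y \<and> finite S \<and> card S \<ge> card T * r"
    and pw: "\<forall>Y\<in>T. \<forall>Y'\<in>T. Y \<noteq> Y' \<longrightarrow> Y \<inter> Y' = Z"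
    and ZY: "\<forall>Y\<in>T. Z \<subseteq> Y"
  shows "\<exists>S. sunflower G S Z \<and> finite S \<and> card S = card T"
proof -
  have "\<forall>Y\<in>T. \<exists>S. sunflower G S Y \<and> finite S \<and> card S \<ge> card ({}::'a set) + card T * r"
    using rich by simp
  then obtain e where e: "\<forall>Y\<in>T. e Y \<in> G \<and> Y \<subseteq> e Y \<and> disj (e Y - Y) {} \<and>
         (\<forall>Y'\<in>T. Y' \<noteq> Y \<longrightarrow> disj (e Y - Y) (e Y'))"
    using lift_aux[OF uG r0 fT, of "{}"] by blast
  have eG: "\<And>Y. Y \<in> T \<Longrightarrow> e Y \<in> G" using e by simp
  have eY: "\<And>Y. Y \<in> T \<Longrightarrow> Y \<subseteq> e Y" using e by simp
  have eP: "\<And>Y Y'. Y \<in> T \<Longrightarrow> Y' \<in> T \<Longrightarrow> Y' \<noteq> Y \<Longrightarrow> disj (e Y - Y) (e Y')" using e by simp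
  have int: "e Y \<inter> e Y' = Z" if "Y \<in> T" "Y' \<in> T" "Y \<noteq> Y'" for Y Y'
  proof
    show "e Y \<inter> e Y' \<subseteq> Z"
    proof
      fix x assume x: "x \<in> e Y \<inter> e Y'"
      have "x \<in> Y" using x eP[OF that(1,2)] that(3) by (auto dest: disjD)
      moreover have "x \<in> Y'" using x eP[OF that(2,1)] that(3) by (auto dest: disjD)
      ultimately show "x \<in> Z" using pw that by auto
    qed
    show "Z \<subseteq> e Y \<inter> e Y'" using ZY eY that by blast
  qed
  have inj: "inj_on e T"
  proof (rule inj_onI)
    fix Y Y' assume YY: "Y \<in> T" "Y' \<in> T" "e Y = e Y'"
    show "Y = Y'"
    proof (rule ccontr)
      assume ne: "Y \<noteq> Y'"
      hence "e Y = Z" using int[OF YY(1,2) ne] YY(3) by simp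
      hence "Y \<subseteq> Z" "Y' \<subseteq> Z" using eY YY by auto
      hence "Y = Y'" using ZY YY by auto
      thus False using ne by simp
    qed
  qed
  have "sunflower G (e ` T) Z" unfolding sunflower_def
  proof (intro conjI ballI impI)
    show "e ` T \<subseteq> G" using eG by auto
  next
    fix h assume "h \<in> e ` T" thus "Z \<subseteq> h" using eY ZY by auto
  next
    fix h h' assume "h \<in> e ` T" "h' \<in> e ` T" "h \<noteq> h'"
    then obtain Y Y' where "Y \<in> T" "Y' \<in> T" "h = e Y" "h' = e Y'" "Y \<noteq> Y'" by auto
    thus "h \<inter> h' = Z" using int by simp
  qed
  moreover have "card (e ` T) = card T" using inj by (simp add: card_image)
  ultimately show ?thesis using fT by (intro exI[of _ "e ` T"]) simp
qed




lemma sunflower_num_pos: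
  assumes "q \<ge> 1" shows "sunflower_num r q \<ge> 1"
proof (rule ccontr)
  assume "\<not> sunflower_num r q \<ge> 1"
  hence z: "sunflower_num r q = 0" by simp
  have "has_sunflower ({} :: nat set set) q"
    using sf_any[of "{}::nat set set" r q] z by (simp add: uniform_def)
  then obtain S Y where "sunflower ({}::nat set set) S Y" "card S = q" unfolding has_sunflower_def by blast
  hence "S = {}" "card S = q" unfolding sunflower_def by auto
  thus False using assms by simp
qed

lemma main_count:
  fixes G :: "'a set set" and V :: "'a set"
  assumes r3: "r \<ge> 3" and k1: "1 \<le> k" and kr: "k \<le> r - 1" and p2: "p \<ge> 2"
    and fV: "finite V" and cV: "card V = n" and nr: "n \<ge> r" and GV: "\<forall>e\<in>G. e \<subseteq> V" and uG: "uniform r G"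
    and no: "\<forall>S Y. sunflower G S Y \<and> finite S \<and> card S = p \<longrightarrow> \<not> card Y \<le> k"
  shows "card G < 2 * r ^ (r - k) * sunflower_num r (p * r ^ (r - k)) * ((n - k - 1) choose (r - k - 1))"
proof -
  define m where "m = p * r ^ (r - k)"
  define F where "F = sunflower_num r m"
  define C where "C = (n - k - 1) choose (r - k - 1)"
  define qf where "qf t = p * r ^ (t - k)" for t
  define good where "good Y \<longleftrightarrow> k < card Y \<and> card Y < r \<and> (\<exists>S. sunflower G S Y \<and> finite S \<and> card S = qf (card Y))" for Y
  have r1: "r \<ge> 1" using r3 by simp
  have qf_mono: "qf t \<le> qf t'" if "t \<le> t'" for t t'
    unfolding qf_def using that r1 by (intro mult_le_mono2 power_increasing) auto
  have qf_ge: "qf t \<ge> p" for t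
    unfolding qf_def using r1 by simp
  have qf_Suc: "qf s = qf (s - 1) * r" if "k < s" for s
  proof -
    have "s - k = Suc (s - 1 - k)" using that by simp
    thus ?thesis unfolding qf_def by (simp add: mult.commute mult.left_commute)
  qed
  have qf_r: "qf r = m" unfolding qf_def m_def ..
  have fG: "finite G"
  proof -
    have "G \<subseteq> Pow V" using GV by auto
    thus ?thesis using fV by (metis finite_Pow_iff finite_subset)
  qed
  have F1: "F \<ge> 1" unfolding F_def m_def using p2 r1 by (intro sunflower_num_pos) simp
  have C1: "C \<ge> 1" unfolding C_def using nr by (simp add: Suc_le_eq)
  have noSmall: "k < card Y" if nsf: "sunflower G S Y" "finite S" "card S \<ge> p" for S Y
  proof -
    obtain S' where "sunflower G S' Y" "finite S'" "card S' = p" using sunflower_sub_card[OF nsf] by blast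
    hence "\<not> card Y \<le> k" using no by blast
    thus ?thesis by simp
  qed
  have richGood: "good Y" if sf: "sunflower G S Y" and fS: "finite S" and cS: "card S \<ge> qf (card Y)" for S Y
  proof -
    have c2: "card S \<ge> 2" using cS qf_ge[of "card Y"] p2 by simp
    have "card Y < r" using sunflower_core[OF sf uG fS c2] by simp
    moreover have "k < card Y" using noSmall[OF sf fS] cS qf_ge[of "card Y"] by simp
    moreover obtain S' where "sunflower G S' Y" "finite S'" "card S' = qf (card Y)"
      using sunflower_sub_card[OF sf fS cS] by blast
    ultimately show ?thesis unfolding good_def by blast
  qed
  have goodV: "Y \<subseteq> V \<and> finite Y" if gY: "good Y" for Y
  proof -
    obtain S where sf: "sunflower G S Y" "finite S" "card S = qf (card Y)" using gY unfolding good_def by blast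
    have c2: "card S \<ge> 2" using sf(3) qf_ge[of "card Y"] p2 by simp
    obtain h where h: "h \<in> S" "Y \<subset> h" using sunflower_core(1)[OF sf(1) uG sf(2) c2] by blast
    have "h \<in> G" using h(1) sf(1) unfolding sunflower_def by auto
    hence "h \<subseteq> V" using GV by simp
    moreover have "finite Y" using sunflower_core(2)[OF sf(1) uG sf(2) c2] .
    ultimately show ?thesis using h(2) by auto
  qed
  define G' where "G' = {e\<in>G. \<forall>Y. Y \<subseteq> e \<longrightarrow> \<not> good Y}"
  have cG': "card G' < F"
  proof (rule ccontr)
    assume "\<not> card G' < F"
    hence cF: "card G' \<ge> F" by simp
    have G'G: "G' \<subseteq> G" unfolding G'_def by auto
    have "finite G'" using G'G fG finite_subset by auto
    moreover have "uniform r G'" using uG G'G unfolding uniform_def by auto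
    ultimately have "has_sunflower G' m" using sf_any cF unfolding F_def by blast
    then obtain S Y where sf: "sunflower G' S Y" "finite S" "card S = m" unfolding has_sunflower_def by blast
    have sfG: "sunflower G S Y" using sunflower_mono[OF sf(1) G'G] .
    have c2: "card S \<ge> 2" using sf(3) qf_ge[of r] qf_r p2 by simp
    have "card Y < r" using sunflower_core(3)[OF sfG uG sf(2) c2] .
    hence "qf (card Y) \<le> m" using qf_mono[of "card Y" r] qf_r by simp
    hence gY: "good Y" using richGood[OF sfG sf(2)] sf(3) by simp
    obtain h where "h \<in> S" using c2 by (metis card.empty ex_in_conv not_numeral_le_zero)
    moreover have "S \<subseteq> G'" "\<forall>h\<in>S. Y \<subseteq> h" using sf(1) unfolding sunflower_def by auto
    ultimately show False using gY unfolding G'_def by auto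
  qed
  define Ms where "Ms s = {Y. good Y \<and> card Y = s \<and> (\<forall>Z. Z \<subset> Y \<longrightarrow> \<not> good Z)}" for s
  have fMs: "finite (Ms s)" for s
  proof -
    have "Ms s \<subseteq> Pow V" unfolding Ms_def using goodV by auto
    thus ?thesis using fV by (metis finite_Pow_iff finite_subset)
  qed
  have cMs: "card (Ms s) < F" if ks: "k < s" and sr: "s < r" for s
  proof (rule ccontr)
    assume "\<not> card (Ms s) < F"
    hence cF: "card (Ms s) \<ge> F" by simp
    define D :: "('a + nat) set" where "D = Inr ` {..<r - s}"
    define pad where "pad Y = Inl ` Y \<union> D" for Y :: "'a set"
    have padmem: "Inl a \<in> pad Y \<longleftrightarrow> a \<in> Y" for a Y unfolding pad_def D_def by blast
    have padInl: "{a. Inl a \<in> pad Y} = Y" for Y using padmem by simp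
    have padInt: "{a. Inl a \<in> pad Y \<inter> pad Y'} = Y \<inter> Y'" for Y Y' by (simp add: padmem Int_def)
    have injpad: "inj_on pad (Ms s)"
    proof (rule inj_onI)
      fix Y Y' assume "pad Y = pad Y'"
      thus "Y = Y'" using padInl[of Y] padInl[of Y'] by metis
    qed
    have upad: "uniform r (pad ` Ms s)" unfolding uniform_def
    proof
      fix A assume "A \<in> pad ` Ms s"
      then obtain Y where Y: "Y \<in> Ms s" "A = pad Y" by auto
      have gY: "good Y" and cY: "card Y = s" using Y(1) unfolding Ms_def by simp_all
      have fY: "finite Y" using goodV[OF gY] by simp
      have "card (Inl ` Y :: ('a + nat) set) = s" using cY by (simp add: card_image)
      moreover have "card D = r - s" unfolding D_def by (simp add: card_image)
      moreover have "Inl ` Y \<inter> D = {}" unfolding D_def by auto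
      moreover have "finite D" unfolding D_def by simp
      ultimately have "card (pad Y) = r" unfolding pad_def using fY sr by (simp add: card_Un_disjoint)
      moreover have "finite (pad Y)" unfolding pad_def using fY \<open>finite D\<close> by simp
      ultimately show "finite A \<and> card A = r" using Y(2) by simp
    qed
    have "card (pad ` Ms s) \<ge> F" using card_image[OF injpad] cF by simp
    moreover have "finite (pad ` Ms s)" using fMs by simp
    ultimately have "has_sunflower (pad ` Ms s) m" using sf_any[OF _ upad] unfolding F_def by simp
    then obtain SA ZA where SA: "sunflower (pad ` Ms s) SA ZA" "finite SA" "card SA = m"
      unfolding has_sunflower_def by blast
    have SAsub: "SA \<subseteq> pad ` Ms s" using SA(1) unfolding sunflower_def by simp
    have SAp: "\<forall>h\<in>SA. \<forall>h'\<in>SA. h \<noteq> h' \<longrightarrow> h \<inter> h' = ZA" using SA(1) unfolding sunflower_def by simp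
    define T0 where "T0 = {Y \<in> Ms s. pad Y \<in> SA}"
    have T0sub: "T0 \<subseteq> Ms s" unfolding T0_def by auto
    have "pad ` T0 = SA"
    proof
      show "pad ` T0 \<subseteq> SA" unfolding T0_def by auto
      show "SA \<subseteq> pad ` T0"
      proof
        fix A assume A: "A \<in> SA"
        then obtain Y where "Y \<in> Ms s" "A = pad Y" using SAsub by auto
        thus "A \<in> pad ` T0" unfolding T0_def using A by auto
      qed
    qed
    moreover have "inj_on pad T0" using injpad T0sub by (rule inj_on_subset)
    ultimately have cT0: "card T0 = m" using SA(3) card_image by metis
    have "qf (s - 1) \<le> m" using qf_mono[of "s - 1" r] qf_r sr by simp
    then obtain T where T: "T \<subseteq> T0" "card T = qf (s - 1)" "finite T"
      using obtain_subset_with_card_n[of "qf (s - 1)" T0] cT0 by metis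
    have TMs: "T \<subseteq> Ms s" using T(1) T0sub by auto
    have cT2: "card T \<ge> 2" using T(2) qf_ge[of "s - 1"] p2 by simp
    obtain Y1 where Y1: "Y1 \<in> T" using cT2 by (metis card.empty ex_in_conv not_numeral_le_zero)
    have "card (T - {Y1}) \<ge> 1" using cT2 T(3) Y1 by simp
    then obtain Y2 where Y2: "Y2 \<in> T" "Y2 \<noteq> Y1" by (metis DiffE card.empty ex_in_conv not_one_le_zero singletonI)
    define Z where "Z = {a. Inl a \<in> ZA}"
    have pw: "\<forall>Y\<in>T. \<forall>Y'\<in>T. Y \<noteq> Y' \<longrightarrow> Y \<inter> Y' = Z"
    proof (intro ballI impI)
      fix Y Y' assume YY: "Y \<in> T" "Y' \<in> T" "Y \<noteq> Y'"
      have "pad Y \<noteq> pad Y'" using injpad YY TMs by (meson inj_onD subsetD)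
      moreover have "pad Y \<in> SA" "pad Y' \<in> SA" using YY(1,2) T(1) unfolding T0_def by auto
      ultimately have "pad Y \<inter> pad Y' = ZA" using SAp by simp
      thus "Y \<inter> Y' = Z" using padInt[of Y Y'] unfolding Z_def by simp
    qed
    have ZY: "\<forall>Y\<in>T. Z \<subseteq> Y"
    proof
      fix Y assume Y: "Y \<in> T"
      show "Z \<subseteq> Y"
      proof (cases "Y = Y1")
        case True
        thus ?thesis using pw Y1 Y2 by (metis Int_lower2)
      next
        case False
        thus ?thesis using pw Y Y1 by (metis Int_lower1)
      qed
    qed
    have rich: "\<forall>Y\<in>T. \<exists>S. sunflower G S Y \<and> finite S \<and> card S \<ge> card T * r"
    proof
      fix Y assume "Y \<in> T"
      hence "good Y" "card Y = s" using TMs unfolding Ms_def by auto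
      then obtain S where "sunflower G S Y" "finite S" "card S = qf s" unfolding good_def by auto
      moreover have "qf s = card T * r" using qf_Suc[OF ks] T(2) by simp
      ultimately show "\<exists>S. sunflower G S Y \<and> finite S \<and> card S \<ge> card T * r" by auto
    qed
    obtain S where S: "sunflower G S Z" "finite S" "card S = card T"
      using lift[OF uG _ T(3) rich pw ZY] r1 by auto
    have Y1M: "Y1 \<in> Ms s" "Y2 \<in> Ms s" using Y1 Y2 TMs by auto
    have fY: "finite Y1" "card Y1 = s" "finite Y2" "card Y2 = s" using Y1M goodV unfolding Ms_def by auto
    have ZY1: "Z = Y1 \<inter> Y2" using pw Y1 Y2 by auto
    have "Z \<noteq> Y1"
    proof
      assume "Z = Y1"
      hence "Y1 \<subseteq> Y2" using ZY1 by auto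
      hence "Y1 = Y2" using fY by (metis card_subset_eq)
      thus False using Y2 by simp
    qed
    hence psub: "Z \<subset> Y1" using ZY1 by auto
    have cZ: "card Z < s" using psubset_card_mono[OF fY(1) psub] fY(2) by simp
    have "qf (card Z) \<le> qf (s - 1)" using cZ by (intro qf_mono) simp
    hence "good Z" using richGood[OF S(1) S(2)] S(3) T(2) by simp
    moreover have "\<forall>Z'. Z' \<subset> Y1 \<longrightarrow> \<not> good Z'" using Y1M unfolding Ms_def by auto
    ultimately show False using psub by auto
  qed
  define W where "W = (\<Union>s\<in>{k<..<r}. \<Union>Y\<in>Ms s. {e\<in>G. Y \<subseteq> e})"
  have cover: "G \<subseteq> G' \<union> W"
  proof
    fix e assume eG: "e \<in> G"
    show "e \<in> G' \<union> W"
    proof (cases "e \<in> G'")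
      case True thus ?thesis by simp
    next
      case False
      then obtain Y where Y: "Y \<subseteq> e" "good Y" unfolding G'_def using eG by auto
      have fY: "finite Y" using goodV[OF Y(2)] by simp
      obtain Y' where Y': "Y' \<subseteq> Y" "good Y'" "\<forall>Z. Z \<subset> Y' \<longrightarrow> \<not> good Z"
        using minimal_exists[of Y good, OF fY Y(2)] by blast
      have "k < card Y'" "card Y' < r" using Y'(2) unfolding good_def by auto
      hence cin: "card Y' \<in> {k<..<r}" by simp
      have YM: "Y' \<in> Ms (card Y')" unfolding Ms_def using Y' by simp
      have "e \<in> {e\<in>G. Y' \<subseteq> e}" using eG Y Y' by auto
      hence "e \<in> (\<Union>Y\<in>Ms (card Y'). {e\<in>G. Y \<subseteq> e})" using YM by (rule UN_I[rotated])
      hence "e \<in> W" unfolding W_def using cin by (rule UN_I[rotated])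
      thus ?thesis by simp
    qed
  qed
  have deg: "card {e\<in>G. Y \<subseteq> e} \<le> C" if "Y \<in> Ms s" "k < s" "s < r" for Y s
  proof -
    have g0: "good Y" "card Y = s" using that(1) unfolding Ms_def by simp_all
    have gY: "Y \<subseteq> V" "finite Y" "card Y = s" using goodV[OF g0(1)] g0(2) by simp_all
    have "card {e\<in>G. Y \<subseteq> e} \<le> (n - s) choose (r - s)"
      using deg_bound[OF fV GV uG gY(1,2)] gY(3) cV by simp
    also have "\<dots> \<le> ((n - s) + (s - k - 1)) choose ((r - s) + (s - k - 1))" by (rule binom_shift)
    also have "(n - s) + (s - k - 1) = n - k - 1" using that nr by simp
    also have "(r - s) + (s - k - 1) = r - k - 1" using that by simp
    finally show ?thesis unfolding C_def .
  qed
  have fW: "finite W"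
  proof -
    have "W \<subseteq> G" unfolding W_def by auto
    thus ?thesis using finite_subset[OF _ fG] by simp
  qed
  have fG': "finite G'" using finite_subset[OF _ fG, of G'] unfolding G'_def by auto
  have "card G \<le> card (G' \<union> W)"
    using cover fW fG' by (intro card_mono) simp_all
  also have "\<dots> \<le> card G' + card W" by (rule card_Un_le)
  also have "card W \<le> (\<Sum>s\<in>{k<..<r}. card (\<Union>Y\<in>Ms s. {e\<in>G. Y \<subseteq> e}))"
    unfolding W_def by (rule card_UN_le) simp
  also have "\<dots> \<le> (\<Sum>s\<in>{k<..<r}. (F - 1) * C)"
  proof (rule sum_mono)
    fix s assume s: "s \<in> {k<..<r}"
    have "card (\<Union>Y\<in>Ms s. {e\<in>G. Y \<subseteq> e}) \<le> (\<Sum>Y\<in>Ms s. card {e\<in>G. Y \<subseteq> e})"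
      using fMs by (rule card_UN_le)
    also have "\<dots> \<le> (\<Sum>Y\<in>Ms s. C)" using deg s by (intro sum_mono) auto
    also have "\<dots> = card (Ms s) * C" by simp
    also have "\<dots> \<le> (F - 1) * C" using cMs[of s] s by (intro mult_le_mono1) auto
    finally show "card (\<Union>Y\<in>Ms s. {e\<in>G. Y \<subseteq> e}) \<le> (F - 1) * C" .
  qed
  also have "\<dots> = (r - k - 1) * ((F - 1) * C)" by simp
  finally have bound: "card G \<le> (F - 1) + (r - k - 1) * ((F - 1) * C)" using cG' by linarith
  have h1: "F - 1 \<le> (F - 1) * C" using C1 by simp
  have h2: "(F - 1) + (r - k - 1) * ((F - 1) * C) \<le> (r - k) * ((F - 1) * C)"
  proof -
    have "(r - k) = Suc (r - k - 1)" using kr r3 by simp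
    hence "(r - k) * ((F - 1) * C) = (F - 1) * C + (r - k - 1) * ((F - 1) * C)" by simp
    thus ?thesis using h1 by simp
  qed
  have h3: "(F - 1) * C < F * C" using F1 C1 by simp
  have rk0: "r - k > 0" using kr r3 by simp
  have h3': "(r - k) * ((F - 1) * C) < (r - k) * (F * C)" using h3 rk0 by simp
  have h4: "r - k \<le> r ^ (r - k)"
  proof -
    have "r - k < 2 ^ (r - k)" by (rule less_exp)
    also have "(2::nat) ^ (r - k) \<le> r ^ (r - k)" using r3 by (intro power_mono) auto
    finally show ?thesis by simp
  qed
  have h5: "(r - k) * (F * C) \<le> r ^ (r - k) * (F * C)" using h4 by (rule mult_le_mono1)
  have "card G < r ^ (r - k) * (F * C)" using bound h2 h3' h5 by linarith
  also have "\<dots> \<le> 2 * r ^ (r - k) * F * C" by simp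
  finally show ?thesis unfolding F_def m_def C_def .
qed




lemma lemma10_aux:
  fixes r k p :: nat and G :: "'a set set" and V :: "'a set"
  assumes r3: "r \<ge> 3" and k1: "1 \<le> k" and kr: "k \<le> r - 1" and p1: "p \<ge> 1"
    and nr: "r \<le> n" and fV: "finite V" and cV: "card V = n" and GV: "\<forall>e\<in>G. e \<subseteq> V" and uG: "uniform r G"
    and cG: "card G \<ge> 2 * r ^ (r - k) * sunflower_num r (p * r ^ (r - k)) * ((n - k - 1) choose (r - k - 1))"
  shows "\<exists>S Y. sunflower G S Y \<and> finite S \<and> card S = p \<and> card Y \<le> k"
proof (cases "p = 1")
  case True
  have F1: "sunflower_num r (p * r ^ (r - k)) \<ge> 1" using p1 r3 by (intro sunflower_num_pos) simp
  have C1: "((n - k - 1) choose (r - k - 1)) \<ge> 1" using nr by (simp add: Suc_le_eq)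
  have "0 < 2 * r ^ (r - k) * sunflower_num r (p * r ^ (r - k)) * ((n - k - 1) choose (r - k - 1))"
    using F1 C1 r3 nr by simp
  hence "card G > 0" using cG by linarith
  then obtain e where e: "e \<in> G" by (metis card.empty ex_in_conv less_irrefl)
  have "sunflower G {e} {}" unfolding sunflower_def using e by simp
  thus ?thesis using True by (intro exI[of _ "{e}"] exI[of _ "{}"]) simp
next
  case False
  hence p2: "p \<ge> 2" using p1 by simp
  show ?thesis
  proof (rule ccontr)
    assume "\<not> (\<exists>S Y. sunflower G S Y \<and> finite S \<and> card S = p \<and> card Y \<le> k)"
    hence no: "\<forall>S Y. sunflower G S Y \<and> finite S \<and> card S = p \<longrightarrow> \<not> card Y \<le> k" by blast
    have "card G < 2 * r ^ (r - k) * sunflower_num r (p * r ^ (r - k)) * ((n - k - 1) choose (r - k - 1))"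
      by (rule main_count[OF r3 k1 kr p2 fV cV nr GV uG no])
    thus False using cG by simp
  qed
qed

theorem lemma10:
  fixes r k p :: nat
  assumes "r \<ge> 3" and "1 \<le> k" and "k \<le> r - 1" and "p \<ge> 1"
  shows "\<exists>n0. \<forall>n \<ge> n0. \<forall>(V :: 'a set) (G :: 'a set set).
     finite V \<and> card V = n \<and> (\<forall>e\<in>G. e \<subseteq> V) \<and> uniform r G \<and>
     card G \<ge> 2 * r ^ (r - k) * sunflower_num r (p * r ^ (r - k)) * ((n - k - 1) choose (r - k - 1))
     \<longrightarrow> (\<exists>S Y. sunflower G S Y \<and> finite S \<and> card S = p \<and> card Y \<le> k)"
  apply (rule exI[of _ r])
  apply (intro allI impI)
  apply (elim conjE)
  apply (rule lemma10_aux[OF assms])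
       apply assumption+
  done


end
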